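(* Let $\mathcal{A}$ be a unital $\mathbb{F}$-algebra of dimension $n>2$ having the maximal possible length $l(\mathcal{A})=2^{n-2}$. Then there exists a generating set $S$ of $\mathcal{A}$ whose characteristic sequence is $(0,1,2,4,\ldots,2^{n-2})$, i.e. $m_0=0$ and $m_h=2^{h-1}$ for $h=1,\ldots,n-1$.
   Context: Algebras are finite-dimensional, unital, not necessarily associative, over a field $\mathbb{F}$. For a finite generating set $S$ of $\mathcal{A}$, a word in $S$ is any product (with any bracketing) of finitely many elements of $S$; its length is the number of factors, and $1$ is a word of length $0$. $L_i(S)$ is the linear span of all words in $S$ of length at most $i$ (so $L_0(S)=\mathbb{F}$); $l(S)=\min\{k\ge0: L_k(S)=\mathcal{A}\}$ and $l(\mathcal{A})=\max\{l(S): S\text{ a finite generating set}\}$. It is known that $l(\mathcal{A})\le 2^{n-2}$ for unital algebras of dimension $n\ge2$, and this bound is attained. The characteristic sequence of $S$ is the non-decreasing sequence $(m_0,\ldots,m_{n-1})$ constructed as follows: $m_0=0$; with $s_1=\dim L_1(S)-1$, set $m_1=\cdots=m_{s_1}=1$; inductively, if $m_1,\ldots,m_r$ are defined using $L_1(S),\ldots,L_{k-1}(S)$, put $s_k=\dim L_k(S)-\dim L_{k-1}(S)$ and set $m_{r+1}=\cdots=m_{r+s_k}=k$. *)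

theory Defs
  imports Complex_Main
begin

definition unital_algebra ::
  "('f::field \<Rightarrow> 'v::ab_group_add \<Rightarrow> 'v) \<Rightarrow> ('v \<Rightarrow> 'v \<Rightarrow> 'v) \<Rightarrow> 'v \<Rightarrow> bool" where
  "unital_algebra scale mult one \<longleftrightarrow>
     vector_space scale \<and>
     (\<forall>a b c. mult (a + b) c = mult a c + mult b c) \<and>
     (\<forall>a b c. mult a (b + c) = mult a b + mult a c) \<and>
     (\<forall>r a b. mult (scale r a) b = scale r (mult a b)) \<and>
     (\<forall>r a b. mult a (scale r b) = scale r (mult a b)) \<and>
     (\<forall>a. mult one a = a \<and> mult a one = a)"

definition finite_dim ::
  "('f::field \<Rightarrow> 'v::ab_group_add \<Rightarrow> 'v) \<Rightarrow> bool" where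
  "finite_dim scale \<longleftrightarrow> (\<exists>B. finite B \<and> module.span scale B = UNIV)"

text \<open>is_word mult one S w k: w is (the value of) a word in S of length k,
  i.e. a product with some bracketing of k elements of S; one is the word of length 0.\<close>

inductive is_word :: "('v \<Rightarrow> 'v \<Rightarrow> 'v) \<Rightarrow> 'v \<Rightarrow> 'v set \<Rightarrow> 'v \<Rightarrow> nat \<Rightarrow> bool"
  for mult one S where
  empty: "is_word mult one S one 0"
| gen: "s \<in> S \<Longrightarrow> is_word mult one S s 1"
| prod: "is_word mult one S a i \<Longrightarrow> is_word mult one S b j \<Longrightarrow> i \<ge> 1 \<Longrightarrow> j \<ge> 1 \<Longrightarrow>
         is_word mult one S (mult a b) (i + j)"

definition Lsp ::
  "('f::field \<Rightarrow> 'v::ab_group_add \<Rightarrow> 'v) \<Rightarrow> ('v \<Rightarrow> 'v \<Rightarrow> 'v) \<Rightarrow> 'v \<Rightarrow> 'v set \<Rightarrow> nat \<Rightarrow> 'v set" where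
  "Lsp scale mult one S i = module.span scale {w. \<exists>k\<le>i. is_word mult one S w k}"

definition generating_set ::
  "('f::field \<Rightarrow> 'v::ab_group_add \<Rightarrow> 'v) \<Rightarrow> ('v \<Rightarrow> 'v \<Rightarrow> 'v) \<Rightarrow> 'v \<Rightarrow> 'v set \<Rightarrow> bool" where
  "generating_set scale mult one S \<longleftrightarrow> finite S \<and> (\<exists>k. Lsp scale mult one S k = UNIV)"

definition set_length ::
  "('f::field \<Rightarrow> 'v::ab_group_add \<Rightarrow> 'v) \<Rightarrow> ('v \<Rightarrow> 'v \<Rightarrow> 'v) \<Rightarrow> 'v \<Rightarrow> 'v set \<Rightarrow> nat" where
  "set_length scale mult one S = (LEAST k. Lsp scale mult one S k = UNIV)"

definition alg_length_is ::
  "('f::field \<Rightarrow> 'v::ab_group_add \<Rightarrow> 'v) \<Rightarrow> ('v \<Rightarrow> 'v \<Rightarrow> 'v) \<Rightarrow> 'v \<Rightarrow> nat \<Rightarrow> bool" where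
  "alg_length_is scale mult one k \<longleftrightarrow>
     (\<exists>S. generating_set scale mult one S \<and> set_length scale mult one S = k) \<and>
     (\<forall>S. generating_set scale mult one S \<longrightarrow> set_length scale mult one S \<le> k)"

text \<open>Characteristic sequence (m_0,...,m_{n-1}) as a list: m_0 = 0, followed for
  k = 1, ..., l(S) by s_k = dim L_k(S) - dim L_{k-1}(S) copies of k
  (note s_1 = dim L_1(S) - 1 since dim L_0(S) = 1).\<close>

definition char_seq ::
  "('f::field \<Rightarrow> 'v::ab_group_add \<Rightarrow> 'v) \<Rightarrow> ('v \<Rightarrow> 'v \<Rightarrow> 'v) \<Rightarrow> 'v \<Rightarrow> 'v set \<Rightarrow> nat list" where
  "char_seq scale mult one S =
     0 # concat (map (\<lambda>k. replicate (vector_space.dim scale (Lsp scale mult one S k)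
                                     - vector_space.dim scale (Lsp scale mult one S (k - 1))) k)
                     [1..<Suc (set_length scale mult one S)])"

end

theory Submission imports Defs begin

lemma list_part:
  fixes d :: "nat \<Rightarrow> nat"
  assumes "d 0 = 1"
    and "\<And>t k. 2^t \<le> k \<Longrightarrow> k < 2^(Suc t) \<Longrightarrow> k \<le> 2^m \<Longrightarrow> d k = t+2"
  shows "concat (map (\<lambda>k. replicate (d k - d (k-1)) k) [1..<Suc (2^m)]) = map (\<lambda>h. 2^(h-1)) [1..<m+2]"
  using assms(2)
proof (induction m)
  case 0
  have "d 1 = 2" using 0[of 0 1] by simp
  then show ?case using assms(1) by simp
next
  case (Suc m)
  have IH: "concat (map (\<lambda>k. replicate (d k - d (k-1)) k) [1..<Suc (2^m)]) = map (\<lambda>h. 2^(h-1)) [1..<m+2]"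
    by (rule Suc.IH) (use Suc.prems in auto)
  have split: "[1..<Suc (2^Suc m)] = [1..<Suc (2^m)] @ [Suc (2^m)..<2^Suc m] @ [2^Suc m]"
  proof -
    have a: "Suc (2^m) \<le> 2^Suc m" using one_le_power[of 2 m] by simp
    have "[1..<Suc (2^Suc m)] = [1..<2^Suc m] @ [2^Suc m]" by simp
    moreover have "[1..<2^Suc m] = [1..<Suc (2^m)] @ [Suc (2^m)..<2^Suc m]"
      using upt_add_eq_append[of 1 "Suc (2^m)" "2^Suc m - Suc (2^m)"] a by (simp add: mult_2)
    ultimately show ?thesis by simp
  qed
  have mid: "concat (map (\<lambda>k. replicate (d k - d (k-1)) k) [Suc (2^m)..<2^Suc m]) = []"
  proof -
    have "d k - d (k-1) = 0" if "k \<in> set [Suc (2^m)..<2^Suc m]" for k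
    proof -
      from that have k: "Suc (2^m) \<le> k" "k < 2^Suc m" by auto
      have "d k = m+2" using Suc.prems[of m k] k by simp
      moreover have "d (k-1) = m+2" using Suc.prems[of m "k-1"] k by simp
      ultimately show ?thesis by simp
    qed
    then show ?thesis by (auto simp: concat_eq_Nil_conv)
  qed
  have last: "d (2^Suc m) - d (2^Suc m - 1) = 1"
  proof -
    have "d (2^Suc m) = Suc m + 2" using Suc.prems[of "Suc m" "2^Suc m"] by simp
    moreover have "d (2^Suc m - 1) = m + 2"
      using Suc.prems[of m "2^Suc m - 1"] one_le_power[of 2 m] by simp
    ultimately show ?thesis by simp
  qed
  have rhs: "[1..<Suc m+2] = [1..<m+2] @ [m+2]" by simp
  have e: "concat (map (\<lambda>k. replicate (d k - d (k-1)) k) [2^Suc m]) = [2^Suc m]"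
    using last by simp
  have e2: "map (\<lambda>h. 2^(h-1)) [m+2] = [(2::nat)^Suc m]" by simp
  show ?case
    by (simp only: split rhs map_append concat_append IH mid e e2 append_Nil)
qed

locale fdalg = finite_dimensional_vector_space scale Basis
  for scale :: "'f::field \<Rightarrow> 'v::ab_group_add \<Rightarrow> 'v" (infixr "*s" 75) and Basis +
  fixes mult :: "'v \<Rightarrow> 'v \<Rightarrow> 'v" and one :: 'v
  assumes ua: "unital_algebra scale mult one"
begin

lemma addL: "mult (a + b) c = mult a c + mult b c" using ua unfolding unital_algebra_def by blast
lemma addR: "mult a (b + c) = mult a b + mult a c" using ua unfolding unital_algebra_def by blast
lemma scL: "mult (r *s a) b = r *s (mult a b)" using ua unfolding unital_algebra_def by blast
lemma scR: "mult a (r *s b) = r *s (mult a b)" using ua unfolding unital_algebra_def by blast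
lemma oneL: "mult one a = a" using ua unfolding unital_algebra_def by blast
lemma oneR: "mult a one = a" using ua unfolding unital_algebra_def by blast

lemma zeroL: "mult 0 b = 0"
proof -
  have "mult (0+0) b = mult 0 b + mult 0 b" by (rule addL)
  then show ?thesis by simp
qed
lemma zeroR: "mult a 0 = 0"
proof -
  have "mult a (0+0) = mult a 0 + mult a 0" by (rule addR)
  then show ?thesis by simp
qed

abbreviation W where "W S i \<equiv> {w. \<exists>k\<le>i. is_word mult one S w k}"

lemma Lsp_eq: "Lsp scale mult one S i = span (W S i)" unfolding Lsp_def by simp

lemma word0: "is_word mult one S w 0 \<Longrightarrow> w = one"
  by (erule is_word.cases) auto

lemma W0: "W S 0 = {one}"
  using word0 is_word.empty by auto

lemma Lmono: "i \<le> j \<Longrightarrow> Lsp scale mult one S i \<subseteq> Lsp scale mult one S j"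
  unfolding Lsp_eq by (rule span_mono) (use le_trans in blast)

lemma word_in_L: "is_word mult one S w k \<Longrightarrow> k \<le> i \<Longrightarrow> w \<in> Lsp scale mult one S i"
  unfolding Lsp_eq by (rule span_base) auto

lemma mult_W: assumes "u \<in> W S p" "v \<in> W S q" shows "mult u v \<in> Lsp scale mult one S (p+q)"
proof -
  from assms obtain i j where i: "i \<le> p" "is_word mult one S u i" and j: "j \<le> q" "is_word mult one S v j" by auto
  show ?thesis
  proof (cases "i = 0")
    case True then have "u = one" using word0 i by auto
    then show ?thesis using j word_in_L[of S v j "p+q"] by (simp add: oneL)
  next
    case False note i0 = False
    show ?thesis
    proof (cases "j = 0")
      case True then have "v = one" using word0 j by auto
      then show ?thesis using i word_in_L[of S u i "p+q"] by (simp add: oneR)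
    next
      case False
      have "is_word mult one S (mult u v) (i+j)" using is_word.prod[OF i(2) j(2)] i0 False by simp
      then show ?thesis using i j word_in_L by simp
    qed
  qed
qed

lemma mult_L: assumes a: "a \<in> Lsp scale mult one S p" and b: "b \<in> Lsp scale mult one S q"
  shows "mult a b \<in> Lsp scale mult one S (p+q)"
proof -
  have 1: "mult u b \<in> Lsp scale mult one S (p+q)" if u: "u \<in> W S p" for u
    using b unfolding Lsp_eq[of S q]
  proof (induction b rule: span_induct_alt)
    case base then show ?case by (simp add: zeroR Lsp_eq span_zero)
  next
    case (step c x y)
    have "mult u x \<in> Lsp scale mult one S (p+q)" using mult_W[OF u] step(1) by simp
    then show ?case using step(2) by (simp add: addR scR Lsp_eq span_add span_scale)
  qed
  show ?thesis
    using a unfolding Lsp_eq[of S p]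
  proof (induction a rule: span_induct_alt)
    case base then show ?case by (simp add: zeroL Lsp_eq span_zero)
  next
    case (step c x y)
    have "mult x b \<in> Lsp scale mult one S (p+q)" using 1 step(1) by simp
    then show ?case using step(2) by (simp add: addL scL Lsp_eq span_add span_scale)
  qed
qed

lemma stab_words:
  assumes "Lsp scale mult one S 1 \<subseteq> Lsp scale mult one S k"
    and "Lsp scale mult one S (2*k) \<subseteq> Lsp scale mult one S k"
    and "is_word mult one S w j"
  shows "w \<in> Lsp scale mult one S k"
  using assms(3)
proof (induction rule: is_word.induct)
  case empty then show ?case using word_in_L[OF is_word.empty] by simp
next
  case (gen s) then show ?case using word_in_L[OF is_word.gen[OF gen]] assms(1) by auto
next
  case (prod a i b j)
  then show ?case using mult_L[OF prod.IH] assms(2) by (auto simp: mult_2)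
qed

lemma stab:
  assumes "Lsp scale mult one S 1 \<subseteq> Lsp scale mult one S k"
    and "Lsp scale mult one S (2*k) \<subseteq> Lsp scale mult one S k"
  shows "Lsp scale mult one S j \<subseteq> Lsp scale mult one S k"
  unfolding Lsp_eq[of S j]
  by (rule span_minimal) (use stab_words[OF assms] Lsp_eq in auto)



lemma main:
  assumes gen: "generating_set scale mult one S" and len: "set_length scale mult one S = 2^m"
    and dimn: "dim (UNIV::'v set) = m+2"
  shows "char_seq scale mult one S = 0 # map (\<lambda>h. 2^(h-1)) [1..<m+2]"
proof -
  define d where "d k = dim (Lsp scale mult one S k)" for k
  have LU: "Lsp scale mult one S (2^m) = UNIV"
  proof -
    from gen obtain k where "Lsp scale mult one S k = UNIV" unfolding generating_set_def by blast
    then have "Lsp scale mult one S (LEAST k. Lsp scale mult one S k = UNIV) = UNIV" by (rule LeastI)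
    then show ?thesis using len unfolding set_length_def by simp
  qed
  have LnU: "Lsp scale mult one S k \<noteq> UNIV" if "k < 2^m" for k
    using not_less_Least[of k "\<lambda>k. Lsp scale mult one S k = UNIV"] that len
    unfolding set_length_def by simp
  have spL: "span (Lsp scale mult one S k) = Lsp scale mult one S k" for k
    unfolding Lsp_eq by simp
  have dle: "d k \<le> m+2" for k unfolding d_def using dim_subset[of _ UNIV] dimn by simp
  have dfull: "Lsp scale mult one S k = UNIV" if "d k = m+2" for k
  proof -
    have "dim (Lsp scale mult one S k) = dimension" using that dimn dim_UNIV unfolding d_def dimension_def by simp
    then show ?thesis using dim_eq_full spL by simp
  qed
  have dlt: "d k < m+2" if "k < 2^m" for k using dle[of k] dfull[of k] LnU[OF that] by fastforce
  have one0: "one \<noteq> 0"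
  proof
    assume "one = 0"
    then have "a = 0" for a :: 'v using oneL[of a] zeroL[of a] by simp
    then have "(UNIV::'v set) \<subseteq> {0}" by auto
    then have "dim (UNIV::'v set) = 0" using dim_eq_0 by blast
    then show False using dimn by simp
  qed
  have d0: "d 0 = 1" unfolding d_def Lsp_eq W0 using one0 by simp
  have dmono: "d i \<le> d j" if "i \<le> j" for i j unfolding d_def using dim_subset Lmono[OF that] by blast
  have grow: "d x < d (2*x)" if "1 \<le> x" "x < 2^m" for x
  proof (rule ccontr)
    assume "\<not> d x < d (2*x)"
    then have "span (Lsp scale mult one S x) = span (Lsp scale mult one S (2*x))"
      using dim_eq_span[OF Lmono[of x "2*x"]] unfolding d_def by simp
    then have a: "Lsp scale mult one S (2*x) \<subseteq> Lsp scale mult one S x" using spL by simp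
    have b: "Lsp scale mult one S 1 \<subseteq> Lsp scale mult one S x" using Lmono that by simp
    have "Lsp scale mult one S (2^m) \<subseteq> Lsp scale mult one S x" by (rule stab[OF b a])
    then show False using LU LnU[OF that(2)] by auto
  qed
  have grow0: "d 0 < d 1"
  proof (rule ccontr)
    assume "\<not> d 0 < d 1"
    then have "span (Lsp scale mult one S 0) = span (Lsp scale mult one S 1)"
      using dim_eq_span[OF Lmono[of 0 1]] unfolding d_def by simp
    then have b: "Lsp scale mult one S 1 \<subseteq> Lsp scale mult one S 0" using spL by simp
    have a: "Lsp scale mult one S (2*0) \<subseteq> Lsp scale mult one S 0" by simp
    have "Lsp scale mult one S (2^m) \<subseteq> Lsp scale mult one S 0" by (rule stab[OF b a])
    then show False using LU LnU[of 0] by auto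
  qed
  have G: "d k + j \<le> d (2^j*k)" if "1 \<le> k" "2^j*k \<le> 2^m" for j k
    using that(2)
  proof (induction j)
    case 0 then show ?case by simp
  next
    case (Suc j)
    have "2^j*k < 2^Suc j * k" using that(1) by simp
    then have lt: "2^j*k < 2^m" using Suc.prems by linarith
    have "d (2^j*k) < d (2*(2^j*k))" by (rule grow) (use that(1) lt in auto)
    then show ?case using Suc.IH lt by (simp add: mult.assoc)
  qed
  have key: "d k = t+2" if t: "2^t \<le> k" "k < 2^(Suc t)" "k \<le> 2^m" for t k
  proof -
    have tm: "t \<le> m" using t(1) t(3) power_increasing_iff[of "2::nat" t m] by linarith
    have "d 1 + t \<le> d (2^t*1)" by (rule G) (use t tm in auto)
    moreover have "d (2^t) \<le> d k" using dmono t by simp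
    moreover have "d 1 \<ge> 2" using grow0 d0 by simp
    ultimately have lo: "t + 2 \<le> d k" by simp
    have "d k \<le> t+2"
    proof (cases "t = m")
      case True then show ?thesis using dle by simp
    next
      case False
      define j where "j = m - t - 1"
      have "(2::nat)^j * 2^Suc t = 2^m" using False tm unfolding j_def power_add[symmetric] by simp
      then have "2^j*k < 2^m" using t(2) by (metis mult_less_cancel1 zero_less_numeral zero_less_power)
      then have "d (2^j*k) < m+2" "d k + j \<le> d (2^j*k)" using dlt G[of k j] t(1) order_trans[OF one_le_power[of "2::nat" t] t(1)] by auto
      then show ?thesis unfolding j_def using False tm by simp
    qed
    then show ?thesis using lo by simp
  qed
  have "concat (map (\<lambda>k. replicate (d k - d (k-1)) k) [1..<Suc (2^m)]) = map (\<lambda>h. 2^(h-1)) [1..<m+2]"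
    by (rule list_part) (use d0 key in auto)
  then show ?thesis unfolding char_seq_def len d_def by simp
qed

end


theorem proposition6p1:
  fixes scale :: "'f::field \<Rightarrow> 'v::ab_group_add \<Rightarrow> 'v"
    and mult :: "'v \<Rightarrow> 'v \<Rightarrow> 'v"
    and one :: 'v
    and n :: nat
  assumes "unital_algebra scale mult one"
    and "finite_dim scale"
    and "n = vector_space.dim scale (UNIV :: 'v set)"
    and "n > 2"
    and "alg_length_is scale mult one (2 ^ (n - 2))"
  shows "\<exists>S. generating_set scale mult one S \<and>
             char_seq scale mult one S = 0 # map (\<lambda>h. 2 ^ (h - 1)) [1..<n]"
proof -
  interpret vs: vector_space scale using assms(1) unfolding unital_algebra_def by blast
  obtain B0 where B0: "finite B0" "vs.span B0 = UNIV" using assms(2) unfolding finite_dim_def by blast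
  obtain B where B: "B \<subseteq> B0" "vs.independent B" "B0 \<subseteq> vs.span B"
    using vs.maximal_independent_subset[of B0] by blast
  have fB: "finite B" using B(1) B0(1) finite_subset by blast
  have sB: "vs.span B = UNIV"
    using B0(2) vs.span_mono[OF B(3)] vs.span_span by auto
  interpret fd: fdalg scale B mult one
    by unfold_locales (use fB B(2) sB assms(1) in auto)
  obtain S where S: "generating_set scale mult one S" "set_length scale mult one S = 2^(n-2)"
    using assms(5) unfolding alg_length_is_def by blast
  have "char_seq scale mult one S = 0 # map (\<lambda>h. 2^(h-1)) [1..<(n-2)+2]"
    by (rule fd.main[OF S]) (use assms(3,4) in simp)
  moreover have "(n-2)+2 = n" using assms(4) by simp
  ultimately show ?thesis using S(1) by (intro exI[of _ S]) metis
qed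

end
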